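(* Let $m\in\mathbb{Z}$, $\sigma\in\mathbb{R}$, $\mathbf{k}=(k_1,\dots,k_n)\in\mathbb{N}^n$ and $\mathbf{l}=(l_1,\dots,l_n)\in(\mathbb{Z}_{\ge0})^n$ with $k_u-1-l_u\ge0$ for all $u$. Then \[\mathrm{Ls}_{\mathbf{k}}^{\mathbf{l}}(2m\pi;2m\pi+\sigma)=\sum_{\mathbf{j}\le\mathbf{l}}(2m\pi)^{|\mathbf{j}|}\binom{\mathbf{l}}{\mathbf{j}}\mathrm{Ls}_{\mathbf{k}-\mathbf{j}}^{\mathbf{l}-\mathbf{j}}(\sigma),\] the sum over all $\mathbf{j}=(j_1,\dots,j_n)\in(\mathbb{Z}_{\ge0})^n$ with $j_u\le l_u$ for all $u$, where $\binom{\mathbf{l}}{\mathbf{j}}=\prod_{u}\binom{l_u}{j_u}$.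
   Context: $|\mathbf{j}|=j_1+\dots+j_n$; tuples are subtracted componentwise; $0^0=1$. With $A(\theta)=\log|2\sin(\theta/2)|$: $\mathrm{Ls}_{\mathbf{k}}^{\mathbf{l}}(\sigma)=(-1)^n\int_0^{\sigma}\int_0^{\theta_n}\cdots\int_0^{\theta_2}\prod_{u=1}^n\theta_u^{l_u}A(\theta_u)^{k_u-1-l_u}\,d\theta_1\cdots d\theta_n$ and $\mathrm{Ls}_{\mathbf{k}}^{\mathbf{l}}(\rho;\sigma)=(-1)^n\int_\rho^{\sigma}\int_\rho^{\theta_n}\cdots\int_\rho^{\theta_2}\prod_{u=1}^n\theta_u^{l_u}A(\theta_u)^{k_u-1-l_u}\,d\theta_1\cdots d\theta_n$ (iterated oriented integrals). *)

theory Defs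
  imports "HOL-Analysis.Analysis"
begin

definition A_fun :: "real \<Rightarrow> real" where
  "A_fun \<theta> = ln \<bar>2 * sin (\<theta> / 2)\<bar>"

definition oint :: "real \<Rightarrow> real \<Rightarrow> (real \<Rightarrow> real) \<Rightarrow> real" where
  "oint a b f = (if a \<le> b then integral {a..b} f else - integral {b..a} f)"

text \<open>Iterated integral; the list is ordered from the outermost variable
  (theta_n) to the innermost (theta_1); each entry is (k_u, l_u).\<close>
fun Ls_iter :: "real \<Rightarrow> (nat \<times> nat) list \<Rightarrow> real \<Rightarrow> real" where
  "Ls_iter \<rho> [] t = 1"
| "Ls_iter \<rho> ((k, l) # ps) t =
     oint \<rho> t (\<lambda>\<theta>. \<theta> ^ l * A_fun \<theta> ^ (k - 1 - l) * Ls_iter \<rho> ps \<theta>)"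

definition Ls2 :: "nat list \<Rightarrow> nat list \<Rightarrow> real \<Rightarrow> real \<Rightarrow> real" where
  "Ls2 ks ls \<rho> \<sigma> = (-1) ^ length ks * Ls_iter \<rho> (rev (zip ks ls)) \<sigma>"

definition Ls1 :: "nat list \<Rightarrow> nat list \<Rightarrow> real \<Rightarrow> real" where
  "Ls1 ks ls \<sigma> = Ls2 ks ls 0 \<sigma>"

end

theory Submission
  imports Defs
begin

lemma A_periodic: "A_fun (2 * of_int m * pi + x) = A_fun x"
proof -
  have e: "(2 * of_int m * pi + x) / 2 = x/2 + of_int m * pi" by simp
  have s: "sin (of_int m * pi) = 0" using sin_zero_iff_int2 by blast
  have "(sin (of_int m * pi))\<^sup>2 + (cos (of_int m * pi))\<^sup>2 = 1" by (rule sin_cos_squared_add)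
  then have c: "\<bar>cos (of_int m * pi)\<bar> = 1" using s
    by (simp add: abs_square_eq_1)
  have "sin ((2 * of_int m * pi + x) / 2) = sin (x/2) * cos (of_int m * pi)"
    unfolding e by (simp add: sin_add s)
  then show ?thesis by (simp add: A_fun_def abs_mult c)
qed

lemma sin_lower: fixes x :: real assumes "0 \<le> x" "x \<le> 1" shows "5/6 * x \<le> sin x"
proof -
  have "\<bar>sin x - (\<Sum>m<3. sin_coeff m * x ^ m)\<bar> \<le> inverse (fact 3) * \<bar>x\<bar> ^ 3"
    by (rule Maclaurin_sin_bound)
  then have "\<bar>sin x - x\<bar> \<le> x^3 / 6" using assms
    by (simp add: numeral_3_eq_3 sin_coeff_def fact_numeral)
  moreover have "x^3 \<le> x" using assms
    by (metis power_le_one less_le_not_le mult_left_le numeral_3_eq_3 power_Suc zero_le_power)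
  ultimately show ?thesis by linarith
qed

lemma ln_bound: assumes "0 < s" "s \<le> 1" "p \<ge> 1"
  shows "- ln s \<le> 2 * real p * s powr (- 1 / (2 * real p))"
proof -
  have "ln (s powr (- 1 / (2 * real p))) \<le> s powr (- 1 / (2 * real p)) - 1"
    by (rule ln_le_minus_one) (use assms in auto)
  then have "- ln s / (2 * real p) \<le> s powr (- 1 / (2 * real p))"
    using assms by (simp add: ln_powr)
  then show ?thesis using assms by (simp add: field_simps)
qed

lemma A_bound_near0:
  assumes "\<bar>x\<bar> \<le> 1"
  shows "\<bar>A_fun x\<bar> ^ p \<le> (2 + 2 * real p) ^ p * (1 + \<bar>x\<bar> powr (-1/2))"
proof (cases "x = 0 \<or> p = 0")
  case True
  have "1 \<le> (2 + 2 * real p) ^ p" by simp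
  moreover have "0 \<le> \<bar>x\<bar> powr (-1/2)" by simp
  ultimately have "1 \<le> (2 + 2 * real p) ^ p * (1 + \<bar>x\<bar> powr (-1/2))"
    by (smt (verit) mult_left_mono mult_cancel_left1)
  then show ?thesis using True by (cases p) (auto simp: A_fun_def)
next
  case False
  define s where "s = \<bar>x\<bar>"
  have s0: "0 < s" "s \<le> 1" using False assms by (auto simp: s_def)
  have up: "\<bar>2 * sin (x/2)\<bar> \<le> s" using abs_sin_x_le_abs_x[of "x/2"] by (simp add: s_def)
  have "5/6 * (s/2) \<le> sin (s/2)" using sin_lower[of "s/2"] s0 by simp
  moreover have "\<bar>sin (x/2)\<bar> = sin (s/2)"
  proof -
    have "0 \<le> sin (s/2)" using sin_ge_zero[of "s/2"] s0 pi_gt3 by simp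
    then show ?thesis by (cases "x \<ge> 0") (auto simp: s_def)
  qed
  ultimately have lo: "5/12 * s \<le> \<bar>2 * sin (x/2)\<bar>" by simp
  have pos: "0 < \<bar>2 * sin (x/2)\<bar>" using lo s0 by linarith
  have "ln \<bar>2 * sin (x/2)\<bar> \<le> 0" using up s0 pos by simp
  moreover have "ln (5/12 * s) \<le> ln \<bar>2 * sin (x/2)\<bar>" using lo s0 by simp
  moreover have "ln (5/12 * s) = ln (5/12) + ln s" using s0 ln_mult[of "5/12" s] by simp
  moreover have "- ln (5/12::real) \<le> 2"
  proof -
    have "ln (12/5::real) \<le> 12/5 - 1" by (rule ln_le_minus_one) simp
    moreover have "ln (12/5::real) = - ln (5/12)" by (simp add: ln_div)
    ultimately show ?thesis by simp
  qed
  ultimately have a1: "\<bar>A_fun x\<bar> \<le> 2 - ln s" unfolding A_fun_def by linarith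
  have p1: "p \<ge> 1" using False by simp
  have w1: "1 \<le> s powr (- 1 / (2 * real p))" using powr_mono2'[of "- 1 / (2 * real p)" s 1] s0 p1 by simp
  have "\<bar>A_fun x\<bar> \<le> (2 + 2 * real p) * s powr (- 1 / (2 * real p))"
    using a1 ln_bound[OF s0 p1] w1 by (simp add: algebra_simps)
  then have "\<bar>A_fun x\<bar> ^ p \<le> ((2 + 2 * real p) * s powr (- 1 / (2 * real p))) ^ p"
    by (intro power_mono) auto
  also have "\<dots> = (2 + 2 * real p) ^ p * s powr (-1/2)"
    using s0 p1 by (simp add: power_mult_distrib powr_power)
  also have "\<dots> \<le> (2 + 2 * real p) ^ p * (1 + \<bar>x\<bar> powr (-1/2))"
    by (simp add: s_def)
  finally show ?thesis .
qed
lemma borel_to_lebesgue_on: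
  fixes h :: "real \<Rightarrow> real"
  assumes "h \<in> borel_measurable borel" shows "h \<in> borel_measurable (lebesgue_on S)"
proof -
  have "(\<lambda>x. h (id x)) \<in> borel_measurable lebesgue"
    by (rule measurable_compose[OF id_borel_measurable_lebesgue assms])
  then have "h \<in> borel_measurable lebesgue" by simp
  then show ?thesis by (rule measurable_restrict_space1)
qed

lemma A_meas: "A_fun \<in> borel_measurable borel" unfolding A_fun_def by measurable

lemma powr_int: fixes x0 :: real shows "(\<lambda>t. \<bar>t - x0\<bar> powr (-1/2)) integrable_on {x0-1..x0+1}"
proof -
  define h where "h = (\<lambda>t::real. \<bar>t\<bar> powr (-1/2))"
  have h01: "h integrable_on {0..1}"
    using integrable_on_powr_from_0[of "-1/2" 1, simplified]
    by (rule integrable_eq) (auto simp: h_def)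
  have "(\<lambda>x. h (- x)) integrable_on {0..1}"
    using h01 by (rule integrable_eq) (auto simp: h_def)
  then have "h integrable_on {-1..0}" using Henstock_Kurzweil_Integration.integrable_reflect_real[where f=h and a="-1" and b=0] by (simp only: minus_zero minus_minus)
  then have "h integrable_on {-1..1}" using h01 Henstock_Kurzweil_Integration.integrable_combine[where a="-1" and c=0 and b=1 and f=h] by simp
  from integrable_shift_real_ivl[OF this, of "-x0"]
  show ?thesis by (simp add: h_def add.commute)
qed
lemma Apow_meas: "(\<lambda>\<theta>. \<bar>A_fun \<theta>\<bar> ^ p) \<in> borel_measurable (lebesgue_on S)"
  by (rule borel_to_lebesgue_on) (use A_meas in measurable)

lemma Apow_int: "(\<lambda>\<theta>. \<bar>A_fun \<theta>\<bar> ^ p) integrable_on cbox a b"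
proof (rule integrable_on_little_subintervals, intro ballI)
  fix x :: real assume "x \<in> cbox a b"
  show "\<exists>d>0. \<forall>u v. x \<in> cbox u v \<and> cbox u v \<subseteq> ball x d \<and> cbox u v \<subseteq> cbox a b \<longrightarrow>
    (\<lambda>\<theta>. \<bar>A_fun \<theta>\<bar> ^ p) integrable_on cbox u v"
  proof (cases "sin (x/2) = 0")
    case False
    have "continuous (at x) (\<lambda>\<theta>. sin (\<theta>/2))" by (intro continuous_intros) auto
    from continuous_at_avoid[OF this False] obtain e where e: "e > 0"
      "\<And>y. dist x y < e \<Longrightarrow> sin (y/2) \<noteq> 0" by blast
    show ?thesis
    proof (intro exI[of _ e] conjI allI impI)
      show "e > 0" by (rule e(1))
    next
      fix u v assume uv: "x \<in> cbox u v \<and> cbox u v \<subseteq> ball x e \<and> cbox u v \<subseteq> cbox a b"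
      have "continuous_on (cbox u v) (\<lambda>\<theta>. \<bar>A_fun \<theta>\<bar> ^ p)"
      proof -
        have nz: "sin (y/2) \<noteq> 0" if "y \<in> cbox u v" for y
        proof -
          have "dist x y < e" using uv that by auto
          then show ?thesis using e by simp
        qed
        show ?thesis unfolding A_fun_def using nz by (intro continuous_intros) auto
      qed
      then show "(\<lambda>\<theta>. \<bar>A_fun \<theta>\<bar> ^ p) integrable_on cbox u v"
        by (rule integrable_continuous)
    qed
  next
    case True
    then obtain i where i: "x / 2 = real_of_int i * pi" using sin_zero_iff_int2 by blast
    define K where "K = (2 + 2 * real p) ^ p"
    show ?thesis
    proof (intro exI[of _ 1] conjI allI impI)
      fix u v assume uv: "x \<in> cbox u v \<and> cbox u v \<subseteq> ball x 1 \<and> cbox u v \<subseteq> cbox a b"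
      have "u \<in> ball x 1" "v \<in> ball x 1" using uv by (auto simp: subset_iff)
      then have sub: "cbox u v \<subseteq> cbox (x-1) (x+1)" by (auto simp: dist_real_def)
      have gi: "(\<lambda>t. K * (1 + \<bar>t - x\<bar> powr (-1/2))) integrable_on cbox u v"
      proof -
        have "(\<lambda>t. K * (1 + \<bar>t - x\<bar> powr (-1/2))) integrable_on {x-1..x+1}"
        proof -
          have h1: "(\<lambda>t. 1 + \<bar>t - x\<bar> powr (-1/2)) integrable_on {x-1..x+1}"
            by (rule integrable_add[OF integrable_const_ivl powr_int])
          show ?thesis using integrable_on_cmult_left[OF h1, of K] by simp
        qed
        then show ?thesis using integrable_on_subcbox[OF _ sub] by simp
      qed
      show "(\<lambda>\<theta>. \<bar>A_fun \<theta>\<bar> ^ p) integrable_on cbox u v"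
      proof (rule measurable_bounded_by_integrable_imp_integrable[OF Apow_meas gi])
        fix t assume t: "t \<in> cbox u v"
        then have "\<bar>t - x\<bar> \<le> 1" using uv by (auto simp: dist_real_def)
        moreover have "A_fun t = A_fun (t - x)"
          using A_periodic[of i "t - x"] i by (simp add: algebra_simps)
        ultimately show "norm (\<bar>A_fun t\<bar> ^ p) \<le> K * (1 + \<bar>t - x\<bar> powr (-1/2))"
          using A_bound_near0[of "t - x" p] by (simp add: K_def)
      qed auto
    qed simp
  qed
qed
lemma prod_int:
  assumes G: "continuous_on {a..b} G"
  shows "(\<lambda>\<theta>. G \<theta> * A_fun \<theta> ^ p) integrable_on {a..b}"
proof -
  have "compact (G ` {a..b})" by (rule compact_continuous_image[OF G]) simp
  then obtain B where B: "B > 0" "\<And>x. x \<in> {a..b} \<Longrightarrow> norm (G x) \<le> B"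
    using compact_imp_bounded bounded_pos by (metis image_eqI)
  have m1: "G \<in> borel_measurable (lebesgue_on {a..b})"
    by (rule continuous_imp_measurable_on_sets_lebesgue[OF G]) simp
  have m2: "(\<lambda>\<theta>. A_fun \<theta> ^ p) \<in> borel_measurable (lebesgue_on {a..b})"
    by (rule borel_to_lebesgue_on) (use A_meas in measurable)
  have m: "(\<lambda>\<theta>. G \<theta> * A_fun \<theta> ^ p) \<in> borel_measurable (lebesgue_on {a..b})"
    using m1 m2 by measurable
  have gi: "(\<lambda>\<theta>. B * \<bar>A_fun \<theta>\<bar> ^ p) integrable_on {a..b}"
    using integrable_on_cmult_left[OF Apow_int[of p a b], of B] by simp
  show ?thesis
  proof (rule measurable_bounded_by_integrable_imp_integrable[OF m gi])
    fix x assume x: "x \<in> {a..b}"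
    have "norm (G x * A_fun x ^ p) = \<bar>G x\<bar> * \<bar>A_fun x\<bar> ^ p" by (simp add: abs_mult power_abs)
    also have "\<dots> \<le> B * \<bar>A_fun x\<bar> ^ p" using B(2)[OF x] by (intro mult_right_mono) auto
    finally show "norm (G x * A_fun x ^ p) \<le> B * \<bar>A_fun x\<bar> ^ p" .
  qed simp
qed
lemma oint_cont:
  fixes g :: "real \<Rightarrow> real"
  assumes gi: "\<And>a b. g integrable_on {a..b}"
  shows "continuous_on UNIV (\<lambda>t. oint 0 t g)"
proof -
  have "continuous (at t) (\<lambda>t. oint 0 t g)" for t
  proof -
    define R where "R = \<bar>t\<bar> + 1"
    have R: "R > 0" by (simp add: R_def)
    have eq: "oint 0 s g = integral {-R..s} g - integral {-R..0} g" if s: "s \<in> {-R..R}" for s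
    proof (cases "0 \<le> s")
      case True
      have "integral {-R..0} g + integral {0..s} g = integral {-R..s} g"
        using True R by (intro Henstock_Kurzweil_Integration.integral_combine gi) auto
      then show ?thesis using True by (simp add: oint_def)
    next
      case False
      have "integral {-R..s} g + integral {s..0} g = integral {-R..0} g"
        using False s by (intro Henstock_Kurzweil_Integration.integral_combine gi) auto
      then show ?thesis using False by (simp add: oint_def)
    qed
    have "continuous_on {-R..R} (\<lambda>s. integral {-R..s} g - integral {-R..0} g)"
      by (intro continuous_intros indefinite_integral_continuous_1 gi)
    then have "continuous_on {-R..R} (\<lambda>s. oint 0 s g)"
      using eq by (metis (no_types, lifting) continuous_on_cong)
    moreover have "t \<in> interior {-R..R}" by (auto simp: R_def)
    ultimately show ?thesis by (rule continuous_on_interior)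
  qed
  then show ?thesis by (simp add: continuous_on_eq_continuous_at)
qed

lemma Ls_cont: "continuous_on UNIV (Ls_iter 0 ps)"
proof (induction ps)
  case Nil
  then show ?case by simp
next
  case (Cons q ps)
  obtain k l where q: "q = (k, l)" by fastforce
  have gi: "(\<lambda>\<theta>. \<theta> ^ l * A_fun \<theta> ^ (k - 1 - l) * Ls_iter 0 ps \<theta>) integrable_on {a..b}" for a b
  proof -
    have "continuous_on {a..b} (\<lambda>\<theta>. \<theta> ^ l * Ls_iter 0 ps \<theta>)"
      using continuous_on_subset[OF Cons.IH] by (intro continuous_intros) auto
    from prod_int[OF this, of "k - 1 - l"] show ?thesis
      by (rule integrable_eq) (simp add: algebra_simps)
  qed
  show ?case unfolding q Ls_iter.simps by (rule oint_cont[OF gi])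
qed

lemma integrand_int:
  "(\<lambda>\<theta>. \<theta> ^ a * A_fun \<theta> ^ p * Ls_iter 0 ps \<theta>) integrable_on {x..y}"
proof -
  have "continuous_on {x..y} (\<lambda>\<theta>. \<theta> ^ a * Ls_iter 0 ps \<theta>)"
    using continuous_on_subset[OF Ls_cont] by (intro continuous_intros) auto
  from prod_int[OF this, of p] show ?thesis
    by (rule integrable_eq) (simp add: algebra_simps)
qed
lemma oint_shift: "oint c (c + t) f = oint 0 t (\<lambda>\<phi>. f (c + \<phi>))"
proof -
  have "integral {a - c..b - c} (\<lambda>x. f (x + c)) = integral {a..b} f" for a b
    by (rule integral_shift_real_ivl)
  from this[of c "c + t"] this[of "c + t" c] show ?thesis
    by (simp add: oint_def add.commute)
qed

lemma oint_sum:
  assumes "finite I" "\<And>i x y. i \<in> I \<Longrightarrow> g i integrable_on {x..y}"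
  shows "oint 0 t (\<lambda>\<phi>. \<Sum>i\<in>I. g i \<phi>) = (\<Sum>i\<in>I. oint 0 t (g i))"
  using assms by (simp add: oint_def integral_sum sum_negf)

lemma oint_cmul: "oint 0 t (\<lambda>\<phi>. c * g \<phi>) = c * oint 0 t g"
  by (simp add: oint_def)

definition Jset :: "nat list \<Rightarrow> nat \<Rightarrow> nat list set" where
  "Jset ls n = {js. length js = n \<and> (\<forall>u<n. js ! u \<le> ls ! u)}"

lemma Jset_finite: "finite (Jset ls n)"
proof -
  define M where "M = Max ((\<lambda>u. ls ! u) ` {..<n})"
  have "Jset ls n \<subseteq> {xs. set xs \<subseteq> {..M} \<and> length xs = n}"
  proof
    fix js assume "js \<in> Jset ls n"
    then have js: "length js = n" "\<And>u. u < n \<Longrightarrow> js ! u \<le> ls ! u" by (auto simp: Jset_def)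
    have "x \<le> M" if "x \<in> set js" for x
    proof -
      obtain u where u: "u < n" "x = js ! u" using \<open>x \<in> set js\<close> js(1) by (auto simp: in_set_conv_nth)
      have "ls ! u \<le> M" unfolding M_def using u by (intro Max_ge) auto
      then show ?thesis using js(2)[OF u(1)] u by simp
    qed
    then show "js \<in> {xs. set xs \<subseteq> {..M} \<and> length xs = n}" using js by auto
  qed
  moreover have "finite {xs. set xs \<subseteq> {..M} \<and> length xs = n}"
    by (rule finite_lists_length_eq) simp
  ultimately show ?thesis by (rule finite_subset)
qed

lemma Jset_Suc:
  assumes "length ls' = n"
  shows "Jset (ls' @ [l]) (Suc n) = (\<lambda>(j, js). js @ [j]) ` ({..l} \<times> Jset ls' n)"
proof (rule set_eqI)
  fix js
  show "js \<in> Jset (ls' @ [l]) (Suc n) \<longleftrightarrow> js \<in> (\<lambda>(j, js). js @ [j]) ` ({..l} \<times> Jset ls' n)"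
  proof
    assume "js \<in> Jset (ls' @ [l]) (Suc n)"
    then have js: "length js = Suc n" "\<And>u. u < Suc n \<Longrightarrow> js ! u \<le> (ls' @ [l]) ! u"
      by (auto simp: Jset_def)
    obtain js' j where e: "js = js' @ [j]" using js(1)
      by (metis length_Suc_conv_rev)
    have l1: "length js' = n" using js(1) e by simp
    have "j \<le> l" using js(2)[of n] e l1 assms by (simp add: nth_append)
    moreover have "js' \<in> Jset ls' n"
    proof -
      have "js' ! u \<le> ls' ! u" if "u < n" for u
        using js(2)[of u] that e l1 assms by (simp add: nth_append)
      then show ?thesis unfolding Jset_def using l1 by auto
    qed
    ultimately show "js \<in> (\<lambda>(j, js). js @ [j]) ` ({..l} \<times> Jset ls' n)"
      using e by auto
  next
    assume "js \<in> (\<lambda>(j, js). js @ [j]) ` ({..l} \<times> Jset ls' n)"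
    then obtain j js' where e: "js = js' @ [j]" "j \<le> l" "js' \<in> Jset ls' n" by auto
    then show "js \<in> Jset (ls' @ [l]) (Suc n)"
      using assms by (auto simp: Jset_def nth_append less_Suc_eq)
  qed
qed

lemma Jset_inj: "inj_on (\<lambda>(j, js). js @ [j]) ({..l} \<times> Jset ls' n)"
  by (auto simp: inj_on_def)
lemma int_cmul_real: "f integrable_on S \<Longrightarrow> (\<lambda>x. (k::real) * f x) integrable_on S"
  using integrable_on_cmult_left[of f S k] by simp

lemma main:
  fixes c :: real
  assumes cdef: "c = 2 * of_int m * pi"
  shows "length ks = n \<Longrightarrow> length ls = n \<Longrightarrow>
    Ls_iter c (rev (zip ks ls)) (c + t) =
    (\<Sum>js \<in> Jset ls n. c ^ sum_list js * real (\<Prod>u<n. (ls ! u) choose (js ! u))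
        * Ls_iter 0 (rev (zip (map2 (-) ks js) (map2 (-) ls js))) t)"
proof (induction n arbitrary: ks ls t)
  case 0
  then have "Jset ls 0 = {[]}" by (auto simp: Jset_def)
  then show ?case using 0 by simp
next
  case (Suc n)
  obtain ks' k where ks: "ks = ks' @ [k]" using Suc.prems(1) by (metis length_Suc_conv_rev)
  obtain ls' l where ls: "ls = ls' @ [l]" using Suc.prems(2) by (metis length_Suc_conv_rev)
  have lk: "length ks' = n" and ll: "length ls' = n" using Suc.prems ks ls by auto
  define p where "p = k - 1 - l"
  define W where "W js' = c ^ sum_list js' * real (\<Prod>u<n. (ls' ! u) choose (js' ! u))" for js'
  define Q where "Q js' = rev (zip (map2 (-) ks' js') (map2 (-) ls' js'))" for js'
  define F where "F j js' \<phi> = \<phi> ^ (l - j) * A_fun \<phi> ^ p * Ls_iter 0 (Q js') \<phi>" for j js' \<phi>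
  define J where "J = Jset ls' n"
  have finJ: "finite J" by (simp add: J_def Jset_finite)
  have IH: "Ls_iter c (rev (zip ks' ls')) (c + t) = (\<Sum>js'\<in>J. W js' * Ls_iter 0 (Q js') t)" for t
    using Suc.IH[OF lk ll] by (simp add: J_def W_def Q_def)
  have "Ls_iter c (rev (zip ks ls)) (c + t) =
     oint c (c + t) (\<lambda>\<theta>. \<theta> ^ l * A_fun \<theta> ^ p * Ls_iter c (rev (zip ks' ls')) \<theta>)"
    using lk ll by (simp add: ks ls p_def)
  also have "\<dots> = oint 0 t (\<lambda>\<phi>. (c + \<phi>) ^ l * A_fun (c + \<phi>) ^ p * Ls_iter c (rev (zip ks' ls')) (c + \<phi>))"
    by (rule oint_shift)
  also have "\<dots> = oint 0 t (\<lambda>\<phi>. \<Sum>(j, js') \<in> {..l} \<times> J. (real (l choose j) * c ^ j * W js') * F j js' \<phi>)"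
  proof -
    have "(c + \<phi>) ^ l * A_fun (c + \<phi>) ^ p * Ls_iter c (rev (zip ks' ls')) (c + \<phi>) =
      (\<Sum>(j, js') \<in> {..l} \<times> J. (real (l choose j) * c ^ j * W js') * F j js' \<phi>)" for \<phi>
    proof -
      have "(c + \<phi>) ^ l * A_fun (c + \<phi>) ^ p * Ls_iter c (rev (zip ks' ls')) (c + \<phi>) =
         (\<Sum>j\<le>l. real (l choose j) * c ^ j * \<phi> ^ (l - j)) * A_fun \<phi> ^ p *
         (\<Sum>js'\<in>J. W js' * Ls_iter 0 (Q js') \<phi>)"
        unfolding IH binomial_ring by (simp add: cdef A_periodic)
      also have "\<dots> = (\<Sum>j\<le>l. \<Sum>js'\<in>J. (real (l choose j) * c ^ j * \<phi> ^ (l - j) * A_fun \<phi> ^ p) * (W js' * Ls_iter 0 (Q js') \<phi>))"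
        by (simp only: sum_distrib_right sum_distrib_left) (rule sum.swap)
      also have "\<dots> = (\<Sum>j\<le>l. \<Sum>js'\<in>J. (real (l choose j) * c ^ j * W js') * F j js' \<phi>)"
        by (simp add: F_def mult_ac)
      also have "\<dots> = (\<Sum>(j, js') \<in> {..l} \<times> J. (real (l choose j) * c ^ j * W js') * F j js' \<phi>)"
        by (rule sum.cartesian_product)
      finally show ?thesis .
    qed
    then show ?thesis by simp
  qed
  also have "\<dots> = (\<Sum>(j, js') \<in> {..l} \<times> J. (real (l choose j) * c ^ j * W js') * oint 0 t (F j js'))"
  proof -
    have "oint 0 t (\<lambda>\<phi>. \<Sum>x \<in> {..l} \<times> J. (\<lambda>(j, js') \<phi>. (real (l choose j) * c ^ j * W js') * F j js' \<phi>) x \<phi>)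
       = (\<Sum>x \<in> {..l} \<times> J. oint 0 t ((\<lambda>(j, js') \<phi>. (real (l choose j) * c ^ j * W js') * F j js' \<phi>) x))"
      by (rule oint_sum) (use finJ in \<open>auto simp: F_def intro!: int_cmul_real integrand_int\<close>)
    then show ?thesis by (simp add: split_def oint_cmul)
  qed
  also have "\<dots> = (\<Sum>js \<in> Jset ls (Suc n). c ^ sum_list js * real (\<Prod>u<Suc n. (ls ! u) choose (js ! u))
        * Ls_iter 0 (rev (zip (map2 (-) ks js) (map2 (-) ls js))) t)"
  proof -
    have "(\<Sum>js \<in> Jset ls (Suc n). c ^ sum_list js * real (\<Prod>u<Suc n. (ls ! u) choose (js ! u))
        * Ls_iter 0 (rev (zip (map2 (-) ks js) (map2 (-) ls js))) t) =
      (\<Sum>(j, js') \<in> {..l} \<times> J. c ^ sum_list (js' @ [j]) * real (\<Prod>u<Suc n. (ls ! u) choose ((js' @ [j]) ! u))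
        * Ls_iter 0 (rev (zip (map2 (-) ks (js' @ [j])) (map2 (-) ls (js' @ [j])))) t)"
      unfolding ls Jset_Suc[OF ll] J_def
      by (subst sum.reindex[OF Jset_inj]) (simp add: split_def)
    also have "\<dots> = (\<Sum>(j, js') \<in> {..l} \<times> J. (real (l choose j) * c ^ j * W js') * oint 0 t (F j js'))"
    proof (rule sum.cong[OF refl])
      fix x assume "x \<in> {..l} \<times> J"
      then obtain j js' where x: "x = (j, js')" and j: "j \<in> {..l}" and js': "js' \<in> J" by auto
      have ljs: "length js' = n" using js' by (simp add: J_def Jset_def)
      have pr: "(\<Prod>u<Suc n. (ls ! u) choose ((js' @ [j]) ! u)) = (\<Prod>u<n. (ls' ! u) choose (js' ! u)) * (l choose j)"
        using ljs ll by (simp add: ls nth_append)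
      have ex: "k - j - 1 - (l - j) = p" using j by (simp add: p_def)
      have zz: "rev (zip (map2 (-) ks (js' @ [j])) (map2 (-) ls (js' @ [j]))) = (k - j, l - j) # Q js'"
        using ljs ll lk by (simp add: ks ls Q_def)
      have "c ^ sum_list (js' @ [j]) * real (\<Prod>u<Suc n. (ls ! u) choose ((js' @ [j]) ! u))
        * Ls_iter 0 (rev (zip (map2 (-) ks (js' @ [j])) (map2 (-) ls (js' @ [j])))) t =
        real (l choose j) * c ^ j * W js' * oint 0 t (F j js')"
      proof -
        have Fe: "F j js' = (\<lambda>\<phi>. \<phi> ^ (l - j) * A_fun \<phi> ^ p * Ls_iter 0 (Q js') \<phi>)"
          by (simp add: F_def fun_eq_iff)
        show ?thesis unfolding pr zz Ls_iter.simps ex Fe by (simp add: W_def power_add mult_ac)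
      qed
      then show "(case x of (j, js') \<Rightarrow> c ^ sum_list (js' @ [j]) * real (\<Prod>u<Suc n. (ls ! u) choose ((js' @ [j]) ! u))
        * Ls_iter 0 (rev (zip (map2 (-) ks (js' @ [j])) (map2 (-) ls (js' @ [j])))) t) =
        (case x of (j, js') \<Rightarrow> real (l choose j) * c ^ j * W js' * oint 0 t (F j js'))"
        by (simp add: x)
    qed
    finally show ?thesis by simp
  qed
  finally show ?case .
qed
theorem lemma4:
  fixes m :: int and \<sigma> :: real and ks ls :: "nat list" and n :: nat
  assumes "length ks = n" and "length ls = n"
    and "\<forall>u<n. 1 \<le> ks ! u"
    and "\<forall>u<n. ls ! u + 1 \<le> ks ! u"
  shows "Ls2 ks ls (2 * of_int m * pi) (2 * of_int m * pi + \<sigma>) =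
    (\<Sum>js \<in> {js. length js = n \<and> (\<forall>u<n. js ! u \<le> ls ! u)}.
        (2 * of_int m * pi) ^ sum_list js
        * real (\<Prod>u<n. (ls ! u) choose (js ! u))
        * Ls1 (map2 (-) ks js) (map2 (-) ls js) \<sigma>)"
proof -
  have S: "{js. length js = n \<and> (\<forall>u<n. js ! u \<le> ls ! u)} = Jset ls n" by (simp add: Jset_def)
  have "Ls2 ks ls (2 * of_int m * pi) (2 * of_int m * pi + \<sigma>) =
    (-1) ^ n * (\<Sum>js \<in> Jset ls n. (2 * of_int m * pi) ^ sum_list js * real (\<Prod>u<n. (ls ! u) choose (js ! u))
        * Ls_iter 0 (rev (zip (map2 (-) ks js) (map2 (-) ls js))) \<sigma>)"
    unfolding Ls2_def using main[OF refl assms(1,2)] assms(1) by simp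
  also have "\<dots> = (\<Sum>js \<in> Jset ls n. (2 * of_int m * pi) ^ sum_list js * real (\<Prod>u<n. (ls ! u) choose (js ! u))
        * Ls1 (map2 (-) ks js) (map2 (-) ls js) \<sigma>)"
    unfolding sum_distrib_left
    by (rule sum.cong[OF refl]) (auto simp: Ls1_def Ls2_def Jset_def assms(1))
  finally show ?thesis unfolding S .
qed

end
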